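(* Let $n,g$ be integers with $0\leq g\leq \lfloor \frac{n-3}{2}\rfloor$, and let $T$ be a tree of order $n$. Then $T$ has an $R_g$-cutset with $\kappa_g(T)=n-2g-2$ if and only if $T$ is of type $T_n^*$ (with respect to $g$).
   Context: All graphs are finite and simple. A tree $T$ of order $n$ is of type $T_n^*$ (with respect to $g$) if it contains a vertex $v$ such that $T-v$ has two connected components with exactly $g+1$ vertices each, and every other connected component of $T-v$ (there may be none) has at most $g$ vertices. Equivalently, $T$ is obtained from two trees $T',T''$ of order $g+1$ and trees $T_1,\ldots,T_r$ ($r\ge 0$) each of order at most $g$ with $\sum_i|V(T_i)|=n-2g-3$, by adding a new vertex $v$ and one edge from $v$ to each of $T',T'',T_1,\ldots,T_r$. A set $S\subseteq V(G)$ is a cutset if $G-S$ is disconnected. For a non-negative integer $g$, a cutset $S$ is an $R_g$-cutset if every connected component of $G-S$ has at least $g+1$ vertices. If $G$ has at least one $R_g$-cutset, the $g$-extra connectivity $\kappa_g(G)$ is the minimum cardinality of an $R_g$-cutset of $G$. *)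

theory Defs
  imports Main
begin

definition simple_graph :: "'a set \<Rightarrow> 'a set set \<Rightarrow> bool" where
  "simple_graph V E \<longleftrightarrow> finite V \<and>
     (\<forall>e\<in>E. \<exists>u v. e = {u, v} \<and> u \<noteq> v \<and> u \<in> V \<and> v \<in> V)"

definition adj :: "'a set set \<Rightarrow> 'a \<Rightarrow> 'a \<Rightarrow> bool" where
  "adj E u v \<longleftrightarrow> {u, v} \<in> E"

definition reach :: "'a set \<Rightarrow> 'a set set \<Rightarrow> 'a \<Rightarrow> 'a \<Rightarrow> bool" where
  "reach V E u v \<longleftrightarrow> u \<in> V \<and> v \<in> V \<and>
     (\<lambda>x y. x \<in> V \<and> y \<in> V \<and> adj E x y)\<^sup>*\<^sup>* u v"

definition connected_graph :: "'a set \<Rightarrow> 'a set set \<Rightarrow> bool" where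
  "connected_graph V E \<longleftrightarrow> V \<noteq> {} \<and> (\<forall>u\<in>V. \<forall>v\<in>V. reach V E u v)"

definition is_cycle :: "'a set \<Rightarrow> 'a set set \<Rightarrow> 'a list \<Rightarrow> bool" where
  "is_cycle V E xs \<longleftrightarrow> length xs \<ge> 3 \<and> distinct xs \<and> set xs \<subseteq> V \<and>
     (\<forall>i < length xs - 1. adj E (xs ! i) (xs ! Suc i)) \<and>
     adj E (last xs) (hd xs)"

definition acyclic_graph :: "'a set \<Rightarrow> 'a set set \<Rightarrow> bool" where
  "acyclic_graph V E \<longleftrightarrow> (\<nexists>xs. is_cycle V E xs)"

definition is_tree :: "'a set \<Rightarrow> 'a set set \<Rightarrow> bool" where
  "is_tree V E \<longleftrightarrow> simple_graph V E \<and> connected_graph V E \<and> acyclic_graph V E"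

definition del_verts_V :: "'a set \<Rightarrow> 'a set \<Rightarrow> 'a set" where
  "del_verts_V V S = V - S"

definition del_verts_E :: "'a set \<Rightarrow> 'a set set \<Rightarrow> 'a set \<Rightarrow> 'a set set" where
  "del_verts_E V E S = {e \<in> E. e \<subseteq> V - S}"

definition components :: "'a set \<Rightarrow> 'a set set \<Rightarrow> 'a set set" where
  "components V E = {{v. reach V E u v} | u. u \<in> V}"

definition cutset :: "'a set \<Rightarrow> 'a set set \<Rightarrow> 'a set \<Rightarrow> bool" where
  "cutset V E S \<longleftrightarrow> S \<subseteq> V \<and> del_verts_V V S \<noteq> {} \<and>
     \<not> connected_graph (del_verts_V V S) (del_verts_E V E S)"

definition Rg_cutset :: "nat \<Rightarrow> 'a set \<Rightarrow> 'a set set \<Rightarrow> 'a set \<Rightarrow> bool" where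
  "Rg_cutset g V E S \<longleftrightarrow> cutset V E S \<and>
     (\<forall>C \<in> components (del_verts_V V S) (del_verts_E V E S). card C \<ge> g + 1)"

definition extra_connectivity :: "nat \<Rightarrow> 'a set \<Rightarrow> 'a set set \<Rightarrow> nat" where
  "extra_connectivity g V E = Min {card S | S. Rg_cutset g V E S}"

definition type_Tn_star :: "nat \<Rightarrow> 'a set \<Rightarrow> 'a set set \<Rightarrow> bool" where
  "type_Tn_star g V E \<longleftrightarrow> (\<exists>v\<in>V.
     let cs = components (del_verts_V V {v}) (del_verts_E V E {v}) in
     \<exists>C1\<in>cs. \<exists>C2\<in>cs. C1 \<noteq> C2 \<and> card C1 = g + 1 \<and> card C2 = g + 1 \<and>
       (\<forall>C\<in>cs - {C1, C2}. card C \<le> g))"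

end

theory Submission
  imports Defs
begin


definition ir :: "'a set set \<Rightarrow> 'a set \<Rightarrow> 'a \<Rightarrow> 'a \<Rightarrow> bool" where
  "ir E W u w \<longleftrightarrow> u \<in> W \<and> w \<in> W \<and> (\<lambda>x y. x \<in> W \<and> y \<in> W \<and> {x,y} \<in> E)\<^sup>*\<^sup>* u w"

definition icomp :: "'a set set \<Rightarrow> 'a set \<Rightarrow> 'a \<Rightarrow> 'a set" where
  "icomp E W u = {w. ir E W u w}"

lemma ir_refl: "u \<in> W \<Longrightarrow> ir E W u u"
  by (simp add: ir_def)

lemma ir_edge: "x \<in> W \<Longrightarrow> y \<in> W \<Longrightarrow> {x,y} \<in> E \<Longrightarrow> ir E W x y"
  by (auto simp: ir_def)

lemma ir_trans: "ir E W u v \<Longrightarrow> ir E W v w \<Longrightarrow> ir E W u w"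
  by (auto simp: ir_def)

lemma ir_sym: assumes "ir E W u w" shows "ir E W w u"
proof -
  let ?R = "\<lambda>x y. x \<in> W \<and> y \<in> W \<and> {x,y} \<in> E"
  have "?R\<^sup>*\<^sup>* u w" using assms by (simp add: ir_def)
  then have "?R\<^sup>*\<^sup>* w u"
  proof (induction rule: rtranclp_induct)
    case base then show ?case by simp
  next
    case (step b c)
    then have "?R c b" by (simp add: insert_commute)
    then show ?case using step.IH by (rule converse_rtranclp_into_rtranclp)
  qed
  then show ?thesis using assms by (simp add: ir_def)
qed

lemma ir_mono: assumes "W \<subseteq> W'" "ir E W u w" shows "ir E W' u w"
proof -
  let ?R = "\<lambda>x y. x \<in> W \<and> y \<in> W \<and> {x,y} \<in> E"
  let ?R' = "\<lambda>x y. x \<in> W' \<and> y \<in> W' \<and> {x,y} \<in> E"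
  have "?R\<^sup>*\<^sup>* u w" using assms by (simp add: ir_def)
  then have "?R'\<^sup>*\<^sup>* u w"
    by (rule rtranclp_mono[THEN predicate2D, rotated]) (use assms(1) in auto)
  then show ?thesis using assms by (auto simp: ir_def)
qed

lemma ir_closed:
  assumes "ir E W u w" "u \<in> U" "U \<subseteq> W" "\<forall>x\<in>U. \<forall>y\<in>W. {x,y} \<in> E \<longrightarrow> y \<in> U"
  shows "ir E U u w"
proof -
  let ?R = "\<lambda>x y. x \<in> W \<and> y \<in> W \<and> {x,y} \<in> E"
  let ?R' = "\<lambda>x y. x \<in> U \<and> y \<in> U \<and> {x,y} \<in> E"
  have "?R\<^sup>*\<^sup>* u w" using assms by (simp add: ir_def)
  then have "w \<in> U \<and> ?R'\<^sup>*\<^sup>* u w"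
  proof (induction rule: rtranclp_induct)
    case base then show ?case using assms by simp
  next
    case (step b c)
    then have "c \<in> U" using assms(4) by blast
    moreover have "?R'\<^sup>*\<^sup>* u c"
    proof (rule rtranclp.rtrancl_into_rtrancl)
      show "?R'\<^sup>*\<^sup>* u b" using step.IH by blast
      show "?R' b c" using step \<open>c \<in> U\<close> by blast
    qed
    ultimately show ?case by simp
  qed
  then show ?thesis using assms by (auto simp: ir_def)
qed

lemma ir_in: "ir E W u w \<Longrightarrow> u \<in> W \<and> w \<in> W"
  by (simp add: ir_def)

lemma comp_sub: "icomp E W u \<subseteq> W"
  by (auto simp: icomp_def ir_def)

lemma comp_self: "u \<in> W \<Longrightarrow> u \<in> icomp E W u"
  by (simp add: icomp_def ir_refl)

lemma comp_same: "icomp E W u = icomp E W c" if "u \<in> icomp E W c"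
proof -
  have "ir E W c u" using that by (simp add: icomp_def)
  then have "ir E W u w \<longleftrightarrow> ir E W c w" for w
    by (meson ir_sym[of E W c u] ir_trans[of E W c u w] ir_trans[of E W u c w])
  then show ?thesis by (simp add: icomp_def)
qed

lemma comp_closed_in: "x \<in> icomp E W c \<Longrightarrow> y \<in> W \<Longrightarrow> {x,y} \<in> E \<Longrightarrow> y \<in> icomp E W c"
proof -
  assume a: "x \<in> icomp E W c" "y \<in> W" "{x,y} \<in> E"
  then have "ir E W c x" by (simp add: icomp_def)
  moreover then have "ir E W x y" using a ir_edge[of x W y E] ir_in[of E W c x] by blast
  ultimately have "ir E W c y" by (rule ir_trans)
  then show ?thesis by (simp add: icomp_def)
qed

lemma comp_closed_eq:
  assumes "U \<subseteq> W" "\<forall>x\<in>U. \<forall>y\<in>W. {x,y} \<in> E \<longrightarrow> y \<in> U" "u \<in> U"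
  shows "icomp E U u = icomp E W u"
proof
  show "icomp E U u \<subseteq> icomp E W u" unfolding icomp_def using ir_mono[OF assms(1)] by blast
  show "icomp E W u \<subseteq> icomp E U u" unfolding icomp_def using ir_closed[OF _ assms(3,1,2)] by blast
qed

lemma reach_ir: "reach (V - S) (del_verts_E V E S) u w = ir E (V - S) u w"
proof -
  have "(\<lambda>x y. x \<in> V - S \<and> y \<in> V - S \<and> adj (del_verts_E V E S) x y)
      = (\<lambda>x y. x \<in> V - S \<and> y \<in> V - S \<and> {x,y} \<in> E)"
    by (auto simp: adj_def del_verts_E_def fun_eq_iff)
  then show ?thesis by (simp add: reach_def ir_def)
qed

lemma reach_ir_V: "reach V E u w = ir E V u w"
  by (simp add: reach_def ir_def adj_def)

lemma components_eq:
  "components (del_verts_V V S) (del_verts_E V E S) = {icomp E (V - S) u | u. u \<in> V - S}"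
  by (simp add: components_def del_verts_V_def reach_ir icomp_def)

lemma Rg_iff: "Rg_cutset g V E S \<longleftrightarrow> S \<subseteq> V \<and> V - S \<noteq> {} \<and>
   (\<exists>a\<in>V-S. \<exists>b\<in>V-S. \<not> ir E (V-S) a b) \<and> (\<forall>u\<in>V-S. g+1 \<le> card (icomp E (V-S) u))"
  unfolding Rg_cutset_def cutset_def components_eq
  by (auto simp: connected_graph_def del_verts_V_def reach_ir)

fun walk :: "('a \<Rightarrow> 'a \<Rightarrow> bool) \<Rightarrow> 'a list \<Rightarrow> bool" where
  "walk R [] = False"
| "walk R [x] = True"
| "walk R (x # y # xs) = (R x y \<and> walk R (y # xs))"

lemma walk_of_rtranclp: "R\<^sup>*\<^sup>* a b \<Longrightarrow> \<exists>p. walk R p \<and> hd p = a \<and> last p = b"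
proof (induction rule: converse_rtranclp_induct)
  case base then show ?case by (intro exI[of _ "[b]"]) simp
next
  case (step a a')
  then obtain p where p: "walk R p" "hd p = a'" "last p = b" by blast
  then obtain t where "p = a' # t" by (cases p) auto
  then show ?case using p step by (intro exI[of _ "a # p"]) auto
qed

lemma walk_append: "walk R (xs @ w # ys) \<longleftrightarrow> walk R (xs @ [w]) \<and> walk R (w # ys)"
proof (induction xs)
  case Nil then show ?case by (cases ys) auto
next
  case (Cons x xs) then show ?case by (cases xs) auto
qed

lemma walk_distinct: "walk R p \<Longrightarrow> \<exists>q. walk R q \<and> distinct q \<and> hd q = hd p \<and> last q = last p \<and> set q \<subseteq> set p"
proof (induction "length p" arbitrary: p rule: less_induct)
  case less
  show ?case
  proof (cases "distinct p")
    case True then show ?thesis using less.prems by blast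
  next
    case False
    then obtain xs ys zs w where p: "p = xs @ [w] @ ys @ [w] @ zs"
      using not_distinct_decomp by blast
    have "walk R (xs @ w # ((ys @ [w]) @ zs))" using less.prems p by simp
    then have w1: "walk R (xs @ [w])" and w1': "walk R (w # ys @ w # zs)"
      using walk_append[of R xs w "(ys @ [w]) @ zs"] by simp_all
    have "walk R ((w # ys) @ w # zs)" using w1' by simp
    then have w2: "walk R (w # zs)" using walk_append[of R "w # ys" w zs] by simp
    have wq: "walk R (xs @ w # zs)" using w1 w2 walk_append[of R xs w zs] by simp
    have lq: "length (xs @ w # zs) < length p" using p by simp
    obtain q where q: "walk R q" "distinct q" "hd q = hd (xs @ w # zs)"
      "last q = last (xs @ w # zs)" "set q \<subseteq> set (xs @ w # zs)"
      using less.hyps[OF lq wq] by (elim exE conjE) simp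
    have "hd (xs @ w # zs) = hd p" using p by (cases xs) auto
    moreover have "last (xs @ w # zs) = last p" using p by (cases zs) auto
    moreover have "set (xs @ w # zs) \<subseteq> set p" using p by auto
    ultimately show ?thesis using q by (intro exI[of _ q]) auto
  qed
qed

lemma walk_nth: "walk R p \<Longrightarrow> i < length p - 1 \<Longrightarrow> R (p!i) (p!Suc i)"
proof (induction R p arbitrary: i rule: walk.induct)
  case (3 R x y xs) then show ?case by (cases i) auto
qed auto

lemma walk_set: "walk R p \<Longrightarrow> hd p \<in> W \<Longrightarrow> (\<forall>x y. R x y \<longrightarrow> y \<in> W) \<Longrightarrow> set p \<subseteq> W"
  by (induction R p rule: walk.induct) auto

lemma no_cycle_nbrs:
  assumes "acyclic_graph V E" "x \<in> V" "{x,y} \<in> E" "{x,z} \<in> E" "y \<noteq> z" "ir E (V-{x}) y z"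
  shows False
proof -
  let ?R = "\<lambda>u w. u \<in> V-{x} \<and> w \<in> V-{x} \<and> {u,w} \<in> E"
  have "?R\<^sup>*\<^sup>* y z" and yV: "y \<in> V-{x}" using assms(6) by (auto simp: ir_def)
  then obtain p where p: "walk ?R p" "hd p = y" "last p = z"
    using walk_of_rtranclp[of ?R y z] by blast
  obtain q where q: "walk ?R q" "distinct q" "hd q = y" "last q = z" "set q \<subseteq> set p"
    using walk_distinct[OF p(1)] p(2,3) by (elim exE conjE) simp
  have qne: "q \<noteq> []" using q(1) by auto
  have sq: "set q \<subseteq> V - {x}" using walk_set[OF q(1), of "V - {x}"] q(3) yV by simp
  have lq: "length q \<ge> 2"
  proof (rule ccontr)
    assume "\<not> ?thesis"
    then obtain a where "q = [a]" using qne by (cases q) (auto simp: Suc_le_eq)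
    then show False using q assms(5) by simp
  qed
  let ?xs = "x # q"
  have "is_cycle V E ?xs"
    unfolding is_cycle_def
  proof (intro conjI allI impI)
    show "3 \<le> length ?xs" using lq by simp
    show "distinct ?xs" using q(2) sq by auto
    show "set ?xs \<subseteq> V" using sq assms(2) by auto
    show "adj E (last ?xs) (hd ?xs)" using q(4) qne assms(4) by (simp add: adj_def insert_commute)
  next
    fix i assume i: "i < length ?xs - 1"
    show "adj E (?xs ! i) (?xs ! Suc i)"
    proof (cases i)
      case 0 then show ?thesis using q(3) qne assms(3) by (simp add: adj_def hd_conv_nth)
    next
      case (Suc j)
      then have "j < length q - 1" using i by simp
      then have "?R (q!j) (q!Suc j)" using walk_nth[OF q(1)] by blast
      then show ?thesis using Suc by (simp add: adj_def)
    qed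
  qed
  then show False using assms(1) by (auto simp: acyclic_graph_def)
qed

lemma L_adj: assumes "ir E W x b" "x \<noteq> b"
  shows "\<exists>z. z \<in> W \<and> z \<noteq> x \<and> {x,z} \<in> E \<and> ir E (W-{x}) z b"
proof -
  let ?R = "\<lambda>u w. u \<in> W \<and> w \<in> W \<and> {u,w} \<in> E"
  have "?R\<^sup>*\<^sup>* x b" using assms by (simp add: ir_def)
  then have "b = x \<or> (\<exists>z. z \<in> W \<and> z \<noteq> x \<and> {x,z} \<in> E \<and> ir E (W-{x}) z b)"
  proof (induction rule: rtranclp_induct)
    case base then show ?case by simp
  next
    case (step b c)
    show ?case
    proof (cases "c = x")
      case True then show ?thesis by simp
    next
      case False
      show ?thesis
      proof (cases "b = x")
        case True then show ?thesis using step False by (auto intro!: ir_refl)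
      next
        case bx: False
        then obtain z where "z \<in> W" "z \<noteq> x" "{x,z} \<in> E" "ir E (W-{x}) z b" using step by blast
        moreover have "ir E (W-{x}) b c" using step False bx by (auto intro: ir_edge)
        ultimately show ?thesis by (blast intro: ir_trans)
      qed
    qed
  qed
  then show ?thesis using assms by blast
qed

lemma L_exit: assumes "ir E V b a" "b \<notin> A" "a \<in> A"
  shows "\<exists>x y. x \<in> V - A \<and> y \<in> A \<and> {x,y} \<in> E \<and> ir E (V-A) b x"
proof -
  let ?R = "\<lambda>u w. u \<in> V \<and> w \<in> V \<and> {u,w} \<in> E"
  have bV: "b \<in> V" using assms by (simp add: ir_def)
  have "?R\<^sup>*\<^sup>* b a" using assms by (simp add: ir_def)
  then have "ir E (V-A) b a \<or> (\<exists>x y. x \<in> V - A \<and> y \<in> A \<and> {x,y} \<in> E \<and> ir E (V-A) b x)"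
  proof (induction rule: rtranclp_induct)
    case base
    have "ir E (V-A) b b" using bV assms(2) by (intro ir_refl) simp
    then show ?case by (rule disjI1)
  next
    case (step c d)
    have cd: "c \<in> V" "d \<in> V" "{c,d} \<in> E" using step.hyps(2) by simp_all
    show ?case
    proof (cases "ir E (V-A) b c")
      case True
      then have cVA: "c \<in> V - A" by (simp add: ir_def)
      show ?thesis
      proof (cases "d \<in> A")
        case dA: True
        show ?thesis
          apply (rule disjI2)
          apply (rule exI[of _ c])
          apply (rule exI[of _ d])
          using True cVA dA cd by simp
      next
        case False
        then have "ir E (V-A) c d" using cd cVA by (intro ir_edge) simp_all
        with True have "ir E (V-A) b d" by (rule ir_trans)
        then show ?thesis by (rule disjI1)
      qed
    next
      case False
      with step.IH show ?thesis by simp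
    qed
  qed
  moreover have "\<not> ir E (V-A) b a" using assms(3) by (simp add: ir_def)
  ultimately show ?thesis by blast
qed

lemma closed_union_Rg:
  assumes "U \<subseteq> W" "W \<subseteq> V" "\<forall>x\<in>U. \<forall>y\<in>W. {x,y} \<in> E \<longrightarrow> y \<in> U"
    "p \<in> U" "q \<in> U" "\<not> ir E W p q" "\<forall>u\<in>U. g+1 \<le> card (icomp E W u)"
  shows "Rg_cutset g V E (V - U)"
proof -
  have VU: "V - (V - U) = U" using assms(1,2) by blast
  have "\<not> ir E U p q" using assms(6) ir_mono[OF assms(1), of E p q] by blast
  moreover have "\<forall>u\<in>U. icomp E U u = icomp E W u" using comp_closed_eq[OF assms(1,3)] by blast
  moreover have "V - U \<subseteq> V" by blast
  moreover have "U \<noteq> {}" using assms(4) by blast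
  ultimately show ?thesis unfolding Rg_iff VU using assms(4,5,7) by (simp; blast)
qed

lemma comp_union_closed:
  assumes "\<forall>C\<in>F. \<exists>c. C = icomp E W c"
  shows "\<forall>x\<in>\<Union>F. \<forall>y\<in>W. {x,y} \<in> E \<longrightarrow> y \<in> \<Union>F"
proof (intro ballI impI)
  fix x y assume "x \<in> \<Union>F" "y \<in> W" "{x,y} \<in> E"
  then obtain C where "C \<in> F" "x \<in> C" by blast
  moreover then obtain c where "C = icomp E W c" using assms by blast
  ultimately have "y \<in> C" using comp_closed_in[of x E W c y] \<open>y \<in> W\<close> \<open>{x,y} \<in> E\<close> by blast
  then show "y \<in> \<Union>F" using \<open>C \<in> F\<close> by blast
qed



lemma comp_disj: "icomp E W c \<noteq> icomp E W d \<Longrightarrow> icomp E W c \<inter> icomp E W d = {}"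
proof (rule ccontr)
  assume ne: "icomp E W c \<noteq> icomp E W d" and "icomp E W c \<inter> icomp E W d \<noteq> {}"
  then obtain w where w1: "w \<in> icomp E W c" and w2: "w \<in> icomp E W d" by blast
  have "icomp E W w = icomp E W c" using w1 by (rule comp_same)
  moreover have "icomp E W w = icomp E W d" using w2 by (rule comp_same)
  ultimately show False using ne by simp
qed

lemma comps_card:
  assumes "\<forall>C\<in>F. \<exists>c. C = icomp E W c \<and> g+1 \<le> card C"
  shows "\<forall>u\<in>\<Union>F. g+1 \<le> card (icomp E W u)"
proof
  fix u assume "u \<in> \<Union>F"
  then obtain C where C: "C \<in> F" "u \<in> C" by blast
  then obtain c where c: "C = icomp E W c" "g+1 \<le> card C" using assms by blast
  have "icomp E W u = icomp E W c" using C(2) c(1) by (simp add: comp_same)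
  then have "icomp E W u = C" using c(1) by simp
  then show "g+1 \<le> card (icomp E W u)" using c by simp
qed

lemma tstar_intro:
  assumes "v \<in> V" "c1 \<in> V-{v}" "c2 \<in> V-{v}"
      "icomp E (V-{v}) c1 \<noteq> icomp E (V-{v}) c2" "card (icomp E (V-{v}) c1) = g+1"
      "card (icomp E (V-{v}) c2) = g+1"
      "\<And>c. c\<in>V-{v} \<Longrightarrow> icomp E (V-{v}) c \<noteq> icomp E (V-{v}) c1 \<Longrightarrow> icomp E (V-{v}) c \<noteq> icomp E (V-{v}) c2 \<Longrightarrow>
          card (icomp E (V-{v}) c) \<le> g"
  shows "type_Tn_star g V E"
proof -
  let ?cs = "{icomp E (V - {v}) u |u. u \<in> V - {v}}"
  let ?C1 = "icomp E (V-{v}) c1"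
  let ?C2 = "icomp E (V-{v}) c2"
  have m1: "?C1 \<in> ?cs" using assms(2) by blast
  have m2: "?C2 \<in> ?cs" using assms(2,3) by blast
  have o: "\<forall>C\<in>?cs - {?C1, ?C2}. card C \<le> g"
  proof
    fix C assume "C \<in> ?cs - {?C1, ?C2}"
    then obtain c where "c \<in> V - {v}" "C = icomp E (V-{v}) c"
      "icomp E (V-{v}) c \<noteq> ?C1" "icomp E (V-{v}) c \<noteq> ?C2" by blast
    then show "card C \<le> g" using assms(7)[of c] by simp
  qed
  have "\<exists>C1\<in>?cs. \<exists>C2\<in>?cs. C1 \<noteq> C2 \<and> card C1 = g + 1 \<and> card C2 = g + 1 \<and>
       (\<forall>C\<in>?cs - {C1, C2}. card C \<le> g)"
    apply (rule bexI[OF _ m1])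
    apply (rule bexI[OF _ m2])
    using o assms(4,5,6) by simp
  then show ?thesis unfolding type_Tn_star_def Let_def components_eq using assms(1) by (rule bexI)
qed

lemma tstar_elim:
  assumes "type_Tn_star g V E"
  obtains v c1 c2 where "v \<in> V" "c1 \<in> V-{v}" "c2 \<in> V-{v}"
      "icomp E (V-{v}) c1 \<noteq> icomp E (V-{v}) c2" "card (icomp E (V-{v}) c1) = g+1"
      "card (icomp E (V-{v}) c2) = g+1"
      "\<And>c. c\<in>V-{v} \<Longrightarrow> icomp E (V-{v}) c \<noteq> icomp E (V-{v}) c1 \<Longrightarrow> icomp E (V-{v}) c \<noteq> icomp E (V-{v}) c2 \<Longrightarrow>
          card (icomp E (V-{v}) c) \<le> g"
proof -
  from assms obtain v C1 C2 where v: "v \<in> V" and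
    C: "C1 \<in> {icomp E (V - {v}) u |u. u \<in> V - {v}}" "C2 \<in> {icomp E (V - {v}) u |u. u \<in> V - {v}}"
      "C1 \<noteq> C2" "card C1 = g+1" "card C2 = g+1"
      "\<forall>C\<in>{icomp E (V - {v}) u |u. u \<in> V - {v}} - {C1, C2}. card C \<le> g"
    unfolding type_Tn_star_def Let_def components_eq by (elim bexE conjE)
  from C(1) obtain c1 where c1: "c1 \<in> V - {v}" "C1 = icomp E (V-{v}) c1" by blast
  from C(2) obtain c2 where c2: "c2 \<in> V - {v}" "C2 = icomp E (V-{v}) c2" by blast
  show ?thesis
  proof (rule that[OF v c1(1) c2(1)])
    show "icomp E (V-{v}) c1 \<noteq> icomp E (V-{v}) c2" using C c1 c2 by simp
    show "card (icomp E (V-{v}) c1) = g+1" using C c1 by simp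
    show "card (icomp E (V-{v}) c2) = g+1" using C c2 by simp
    fix c assume "c\<in>V-{v}" "icomp E (V-{v}) c \<noteq> icomp E (V-{v}) c1" "icomp E (V-{v}) c \<noteq> icomp E (V-{v}) c2"
    then have "icomp E (V-{v}) c \<in> {icomp E (V - {v}) u |u. u \<in> V - {v}} - {C1, C2}"
      using c1(2) c2(2) by auto
    then show "card (icomp E (V-{v}) c) \<le> g" using C(6) by (rule bspec[rotated])
  qed
qed

lemma card_diff_n: "S \<subseteq> V \<Longrightarrow> finite V \<Longrightarrow> card V = n \<Longrightarrow> card (V - S) = n - card S \<and> card S \<le> n"
  by (metis card_Diff_subset card_mono finite_subset)

lemma comp_in_closed:
  assumes "w \<in> icomp E X y" shows "ir E (icomp E X y) y w"
proof -
  have yX: "y \<in> X" and "ir E X y w" using assms by (auto simp: icomp_def ir_def)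
  moreover have "y \<in> icomp E X y" using yX by (rule comp_self)
  moreover have "\<forall>x\<in>icomp E X y. \<forall>z\<in>X. {x,z} \<in> E \<longrightarrow> z \<in> icomp E X y"
    using comp_closed_in[of _ E X y] by blast
  ultimately show ?thesis using ir_closed[of E X y w "icomp E X y"] comp_sub[of E X y] by blast
qed

theorem theorem4p3:
  fixes V :: "'a set" and E :: "'a set set" and n g :: nat
  assumes "is_tree V E" and "card V = n"
    and "int g \<le> (int n - 3) div 2"
  shows "((\<exists>S. Rg_cutset g V E S) \<and> extra_connectivity g V E = n - 2 * g - 2)
         \<longleftrightarrow> type_Tn_star g V E"
proof -
  have n3: "2*g+3 \<le> n" using assms(3) by presburger
  have finV: "finite V" using assms(1) by (simp add: is_tree_def simple_graph_def)
  have conn: "\<And>u w. u\<in>V \<Longrightarrow> w\<in>V \<Longrightarrow> ir E V u w" using assms(1)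
    by (simp add: is_tree_def connected_graph_def reach_ir_V)
  have acyc: "acyclic_graph V E" using assms(1) by (simp add: is_tree_def)
  have finK: "finite {card S | S. Rg_cutset g V E S}"
  proof (rule finite_subset)
    show "{card S | S. Rg_cutset g V E S} \<subseteq> {..n}"
    proof
      fix k assume "k \<in> {card S | S. Rg_cutset g V E S}"
      then obtain S where "k = card S" "Rg_cutset g V E S" by blast
      then have "S \<subseteq> V" "k = card S" by (simp_all add: Rg_iff)
      then show "k \<in> {..n}" using card_diff_n[of S V n] finV assms(2) by simp
    qed
  qed simp
  have cardcomp: "finite (icomp E W c)" if "W \<subseteq> V" for W c
    using finite_subset[OF comp_sub[of E W c] finite_subset[OF that finV]] .
  show ?thesis
  proof
    assume L: "(\<exists>S. Rg_cutset g V E S) \<and> extra_connectivity g V E = n - 2 * g - 2"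
    have H: "n - 2*g - 2 \<le> card S" if "Rg_cutset g V E S" for S
    proof -
      have "card S \<in> {card S | S. Rg_cutset g V E S}" using that by blast
      then have "Min {card S | S. Rg_cutset g V E S} \<le> card S" by (rule Min_le[OF finK])
      then show ?thesis using L unfolding extra_connectivity_def by simp
    qed
    have bound: "card U \<le> 2*g+2" if "U \<subseteq> W" "W \<subseteq> V" "\<forall>x\<in>U. \<forall>y\<in>W. {x,y} \<in> E \<longrightarrow> y \<in> U"
      "p \<in> U" "q \<in> U" "\<not> ir E W p q" "\<forall>u\<in>U. g+1 \<le> card (icomp E W u)" for U W p q
    proof -
      have "n - 2*g - 2 \<le> card (V - U)" using H[OF closed_union_Rg[OF that]] .
      moreover have "U \<subseteq> V" using that(1,2) by (rule order_trans)
      then have "card (V - U) = n - card U \<and> card U \<le> n" using card_diff_n finV assms(2) by blast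
      ultimately show ?thesis using n3 by linarith
    qed
    obtain S0 where S0: "Rg_cutset g V E S0" using L by blast
    let ?X = "V - S0"
    obtain a b where ab: "a \<in> ?X" "b \<in> ?X" "\<not> ir E ?X a b" and
      cX: "\<forall>u\<in>?X. g+1 \<le> card (icomp E ?X u)" and S0V: "S0 \<subseteq> V"
      using S0 unfolding Rg_iff by (elim conjE bexE) simp
    define A where "A = icomp E ?X a"
    define B where "B = icomp E ?X b"
    have AX: "A \<subseteq> ?X" "B \<subseteq> ?X" unfolding A_def B_def by (rule comp_sub)+
    then have AV: "A \<subseteq> V" "B \<subseteq> V" by blast+
    have aA: "a \<in> A" and bB: "b \<in> B" using ab by (simp_all add: A_def B_def comp_self)
    have bA: "b \<notin> A" using ab by (simp add: A_def icomp_def)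
    have "ir E V b a" using conn ab by blast
    then obtain x y where xy: "x \<in> V - A" "y \<in> A" "{x,y} \<in> E" "ir E (V-A) b x"
      using L_exit[OF _ bA aA] by blast
    have xB: "x \<notin> B"
    proof
      assume "x \<in> B"
      moreover have "y \<in> ?X" using xy(2) AX by blast
      moreover have "{x,y} \<in> E" by (rule xy(3))
      ultimately have "y \<in> B" unfolding B_def by (rule comp_closed_in)
      then have "icomp E ?X y = B" unfolding B_def by (rule comp_same)
      moreover have "icomp E ?X y = A" using xy(2) unfolding A_def by (rule comp_same)
      ultimately show False using bA bB by simp
    qed
    then have "x \<noteq> b" using bB by blast
    then obtain z where z: "z \<in> V - A" "z \<noteq> x" "{x,z} \<in> E" "ir E (V-A-{x}) z b"
      using L_adj[OF ir_sym[OF xy(4)]] by blast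
    define W where "W = V - {x}"
    have xV: "x \<in> V" using xy by blast
    have AW: "A \<subseteq> W" "B \<subseteq> W" using AV xy xB by (auto simp: W_def)
    have irA: "ir E W a w" if "w \<in> A" for w
    proof -
      have "w \<in> icomp E ?X a" using that by (simp add: A_def)
      then have "ir E A a w" unfolding A_def by (rule comp_in_closed)
      then show ?thesis by (rule ir_mono[OF AW(1)])
    qed
    have irB: "ir E W b w" if "w \<in> B" for w
    proof -
      have "w \<in> icomp E ?X b" using that by (simp add: B_def)
      then have "ir E B b w" unfolding B_def by (rule comp_in_closed)
      then show ?thesis by (rule ir_mono[OF AW(2)])
    qed
    have nab: "\<not> ir E W a b"
    proof
      assume ab': "ir E W a b"
      have "ir E W y a" using irA[OF xy(2)] by (rule ir_sym)
      moreover have "V - A - {x} \<subseteq> W" by (auto simp: W_def)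
      then have "ir E W z b" using z(4) by (rule ir_mono)
      then have "ir E W b z" by (rule ir_sym)
      ultimately have "ir E W y z" using ab' ir_trans[of E W y a b] ir_trans[of E W y b z] by blast
      moreover have "y \<noteq> z" using xy z by blast
      ultimately show False using no_cycle_nbrs[OF acyc xV xy(3) z(3)] unfolding W_def by blast
    qed
    define C1 where "C1 = icomp E W a"
    define C2 where "C2 = icomp E W b"
    have WV: "W \<subseteq> V" by (simp add: W_def)
    have aW: "a \<in> W" and bW: "b \<in> W" using AW aA bB by blast+
    have AC1: "A \<subseteq> C1" using irA by (auto simp: C1_def icomp_def)
    have BC2: "B \<subseteq> C2" using irB by (auto simp: C2_def icomp_def)
    have fin1: "finite C1" "finite C2" using cardcomp[OF WV] by (simp_all add: C1_def C2_def)
    have cA: "g+1 \<le> card A" using cX ab by (simp add: A_def)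
    have cB: "g+1 \<le> card B" using cX ab by (simp add: B_def)
    have c1: "g+1 \<le> card C1" using card_mono[OF fin1(1) AC1] cA by linarith
    have c2: "g+1 \<le> card C2" using card_mono[OF fin1(2) BC2] cB by linarith
    have bC1: "b \<notin> C1" using nab by (simp add: C1_def icomp_def)
    have C12: "C1 \<noteq> C2" using bC1 bW by (auto simp: C2_def comp_self)
    have disj: "C1 \<inter> C2 = {}" using comp_disj[of E W a b] C12 unfolding C1_def C2_def by simp
    have cc2: "\<forall>C\<in>{C1,C2}. \<exists>c. C = icomp E W c \<and> g+1 \<le> card C"
      using c1 c2 unfolding C1_def C2_def by blast
    have cardsC: "\<forall>u\<in>C1 \<union> C2. g+1 \<le> card (icomp E W u)"
      using comps_card[OF cc2] by simp
    have clos2: "\<forall>p\<in>C1 \<union> C2. \<forall>q\<in>W. {p,q} \<in> E \<longrightarrow> q \<in> C1 \<union> C2"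
      using comp_union_closed[of "{C1, C2}" E W] cc2 by simp
    have sub2: "C1 \<union> C2 \<subseteq> W" unfolding C1_def C2_def by (intro Un_least comp_sub)
    have aC: "a \<in> C1 \<union> C2" and bC: "b \<in> C1 \<union> C2"
      using aW bW by (auto simp: C1_def C2_def comp_self)
    have "card (C1 \<union> C2) \<le> 2*g+2" by (rule bound[OF sub2 WV clos2 aC bC nab cardsC])
    then have sum: "card C1 + card C2 \<le> 2*g+2" using card_Un_disjoint[OF fin1 disj] by simp
    have eq1: "card C1 = g+1" and eq2: "card C2 = g+1" using sum c1 c2 by linarith+
    have others: "card (icomp E W c) \<le> g"
      if c: "c \<in> W" "icomp E W c \<noteq> C1" "icomp E W c \<noteq> C2" for c
    proof (rule ccontr)
      assume "\<not> ?thesis"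
      then have c3: "g+1 \<le> card (icomp E W c)" by simp
      let ?C = "icomp E W c"
      have fin3: "finite ?C" using cardcomp[OF WV] by blast
      have d1: "C1 \<inter> ?C = {}" using comp_disj[of E W a c] c(2) unfolding C1_def by simp
      have d2: "C2 \<inter> ?C = {}" using comp_disj[of E W b c] c(3) unfolding C2_def by simp
      have cc3: "\<forall>C\<in>{C1,C2,?C}. \<exists>c. C = icomp E W c \<and> g+1 \<le> card C"
        using c1 c2 c3 unfolding C1_def C2_def by blast
      have cardsC3: "\<forall>u\<in>C1 \<union> C2 \<union> ?C. g+1 \<le> card (icomp E W u)"
        using comps_card[OF cc3] by (simp add: Un_assoc)
      have clos3: "\<forall>p\<in>C1 \<union> C2 \<union> ?C. \<forall>q\<in>W. {p,q} \<in> E \<longrightarrow> q \<in> C1 \<union> C2 \<union> ?C"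
        using comp_union_closed[of "{C1, C2, ?C}" E W] cc3 by (simp add: Un_assoc)
      have sub3: "C1 \<union> C2 \<union> ?C \<subseteq> W" using sub2 comp_sub[of E W c] by blast
      have "card (C1 \<union> C2 \<union> ?C) \<le> 2*g+2"
        by (rule bound[OF sub3 WV clos3 _ _ nab cardsC3]) (use aC bC in blast)+
      moreover have "card (C1 \<union> C2 \<union> ?C) = card C1 + card C2 + card ?C"
      proof -
        have "(C1 \<union> C2) \<inter> ?C = {}" using d1 d2 by blast
        then have "card (C1 \<union> C2 \<union> ?C) = card (C1 \<union> C2) + card ?C"
          using fin1 fin3 by (simp add: card_Un_disjoint)
        then show ?thesis using card_Un_disjoint[OF fin1 disj] by simp
      qed
      ultimately show False using eq1 eq2 c3 by linarith
    qed
    show "type_Tn_star g V E"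
    proof (rule tstar_intro[of x V a b E g])
      show "x \<in> V" by (rule xV)
      show "a \<in> V - {x}" "b \<in> V - {x}" using aW bW by (simp_all add: W_def)
      show "icomp E (V - {x}) a \<noteq> icomp E (V - {x}) b" using C12 by (simp add: C1_def C2_def W_def)
      show "card (icomp E (V - {x}) a) = g+1" "card (icomp E (V - {x}) b) = g+1"
        using eq1 eq2 by (simp_all add: C1_def C2_def W_def)
      fix c assume "c \<in> V - {x}" "icomp E (V - {x}) c \<noteq> icomp E (V - {x}) a"
        "icomp E (V - {x}) c \<noteq> icomp E (V - {x}) b"
      then show "card (icomp E (V - {x}) c) \<le> g" using others[of c] by (simp add: C1_def C2_def W_def)
    qed
  next
    assume "type_Tn_star g V E"
    then obtain v c1 c2 where v: "v \<in> V" "c1 \<in> V-{v}" "c2 \<in> V-{v}"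
      "icomp E (V-{v}) c1 \<noteq> icomp E (V-{v}) c2" "card (icomp E (V-{v}) c1) = g+1"
      "card (icomp E (V-{v}) c2) = g+1"
      and v7': "\<forall>c. c\<in>V-{v} \<longrightarrow> icomp E (V-{v}) c \<noteq> icomp E (V-{v}) c1 \<longrightarrow> icomp E (V-{v}) c \<noteq> icomp E (V-{v}) c2 \<longrightarrow>
          card (icomp E (V-{v}) c) \<le> g"
    proof (rule tstar_elim)
      fix v c1 c2 assume "v \<in> V" "c1 \<in> V-{v}" "c2 \<in> V-{v}"
      "icomp E (V-{v}) c1 \<noteq> icomp E (V-{v}) c2" "card (icomp E (V-{v}) c1) = g+1"
      "card (icomp E (V-{v}) c2) = g+1"
      and "\<And>c. c\<in>V-{v} \<Longrightarrow> icomp E (V-{v}) c \<noteq> icomp E (V-{v}) c1 \<Longrightarrow> icomp E (V-{v}) c \<noteq> icomp E (V-{v}) c2 \<Longrightarrow>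
          card (icomp E (V-{v}) c) \<le> g"
      then show ?thesis using that[of v c1 c2] by simp
    qed
    have v7: "card (icomp E (V-{v}) c) \<le> g" if "c\<in>V-{v}" "icomp E (V-{v}) c \<noteq> icomp E (V-{v}) c1" "icomp E (V-{v}) c \<noteq> icomp E (V-{v}) c2" for c
      using v7' that by simp
    define W where "W = V - {v}"
    define C1 where "C1 = icomp E W c1"
    define C2 where "C2 = icomp E W c2"
    have WV: "W \<subseteq> V" by (simp add: W_def)
    have fin1: "finite C1" "finite C2" using cardcomp[OF WV] by (simp_all add: C1_def C2_def)
    have C12: "C1 \<noteq> C2" and e1: "card C1 = g+1" and e2: "card C2 = g+1"
      using v by (simp_all add: C1_def C2_def W_def)
    have oth: "card (icomp E W c) \<le> g" if "c \<in> W" "icomp E W c \<noteq> C1" "icomp E W c \<noteq> C2" for c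
      using v7[of c] that unfolding C1_def C2_def W_def by simp
    have disj: "C1 \<inter> C2 = {}" using comp_disj[of E W c1 c2] C12 unfolding C1_def C2_def by simp
    have c1W: "c1 \<in> C1" and c2W: "c2 \<in> C2" using v unfolding C1_def C2_def W_def by (simp_all add: comp_self)
    have n12: "\<not> ir E W c1 c2"
    proof
      assume "ir E W c1 c2"
      then have "c2 \<in> C1" by (simp add: C1_def icomp_def)
      then have "icomp E W c2 = C1" unfolding C1_def by (rule comp_same)
      then show False using C12 unfolding C2_def by simp
    qed
    have cc2: "\<forall>C\<in>{C1,C2}. \<exists>c. C = icomp E W c \<and> g+1 \<le> card C"
      using e1 e2 unfolding C1_def C2_def by auto
    have cardsC: "\<forall>u\<in>C1 \<union> C2. g+1 \<le> card (icomp E W u)"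
      using comps_card[OF cc2] by simp
    have clos2: "\<forall>p\<in>C1 \<union> C2. \<forall>q\<in>W. {p,q} \<in> E \<longrightarrow> q \<in> C1 \<union> C2"
      using comp_union_closed[of "{C1, C2}" E W] cc2 by simp
    have sub2: "C1 \<union> C2 \<subseteq> W" unfolding C1_def C2_def by (intro Un_least comp_sub)
    have Rg0: "Rg_cutset g V E (V - (C1 \<union> C2))"
      by (rule closed_union_Rg[OF sub2 WV clos2 _ _ n12 cardsC]) (use c1W c2W in blast)+
    have cU: "card (C1 \<union> C2) = 2*g+2" using card_Un_disjoint[OF fin1 disj] e1 e2 by simp
    have "C1 \<union> C2 \<subseteq> V" using sub2 WV by (rule order_trans)
    then have card0: "card (V - (C1 \<union> C2)) = n - (2*g+2)"
      using card_diff_n[of "C1 \<union> C2" V n] finV assms(2) cU by simp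
    have adjv: "\<exists>z\<in>icomp E W c. {v,z} \<in> E" if "c \<in> W" for c
    proof -
      have "ir E V v c" using conn v(1) that WV by blast
      moreover have "v \<noteq> c" using that by (auto simp: W_def)
      ultimately have "\<exists>z. z \<in> V \<and> z \<noteq> v \<and> {v,z} \<in> E \<and> ir E (V-{v}) z c"
        by (rule L_adj)
      then obtain z where z: "{v,z} \<in> E" "ir E W z c" unfolding W_def by blast
      from z(2) have "ir E W c z" by (rule ir_sym)
      then have "z \<in> icomp E W c" by (simp add: icomp_def)
      then show ?thesis using z(1) by blast
    qed
    have lower: "n - 2*g - 2 \<le> card S" if S: "Rg_cutset g V E S" for S
    proof -
      let ?X = "V - S"
      obtain a b where ab: "a \<in> ?X" "b \<in> ?X" "\<not> ir E ?X a b" and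
        cX: "\<forall>u\<in>?X. g+1 \<le> card (icomp E ?X u)" and SV: "S \<subseteq> V"
        using S unfolding Rg_iff by (elim conjE bexE) simp
      have Dcl: "icomp E W y \<in> {C1, C2} \<and> icomp E ?X y \<subseteq> icomp E W y"
        if y: "y \<in> ?X" "v \<notin> icomp E ?X y" for y
      proof -
        let ?D = "icomp E ?X y"
        have DW: "?D \<subseteq> W" using comp_sub[of E ?X y] y(2) unfolding W_def by blast
        have sub: "?D \<subseteq> icomp E W y"
        proof
          fix w assume "w \<in> ?D"
          then have "ir E ?D y w" by (rule comp_in_closed)
          then have "ir E W y w" by (rule ir_mono[OF DW])
          then show "w \<in> icomp E W y" by (simp add: icomp_def)
        qed
        have "g+1 \<le> card ?D" using cX y by blast
        also have "\<dots> \<le> card (icomp E W y)" using card_mono[OF cardcomp[OF WV] sub] .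
        finally have cy: "g+1 \<le> card (icomp E W y)" .
        have yW: "y \<in> W" using DW comp_self[OF y(1), of E] by blast
        have "icomp E W y \<in> {C1, C2}"
        proof (rule ccontr)
          assume "icomp E W y \<notin> {C1, C2}"
          then have "card (icomp E W y) \<le> g" using oth[OF yW] by simp
          then show False using cy by simp
        qed
        then show ?thesis using sub by blast
      qed
      have vX: "v \<notin> ?X"
      proof
        assume vX: "v \<in> ?X"
        have "\<exists>y\<in>?X. \<not> ir E ?X v y"
        proof (rule ccontr)
          assume "\<not> ?thesis"
          then have "ir E ?X v a" "ir E ?X v b" using ab by blast+
          then have "ir E ?X a b" using ir_sym[of E ?X v a] ir_trans[of E ?X a v b] by blast
          then show False using ab by simp
        qed
        then obtain y where y: "y \<in> ?X" "\<not> ir E ?X v y" by blast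
        have vD: "v \<notin> icomp E ?X y"
        proof
          assume "v \<in> icomp E ?X y"
          then have "ir E ?X y v" by (simp add: icomp_def)
          then have "ir E ?X v y" by (rule ir_sym)
          then show False using y(2) by simp
        qed
        from Dcl[OF y(1) vD] have DC: "icomp E W y \<in> {C1, C2}" "icomp E ?X y \<subseteq> icomp E W y" by blast+
        obtain c where c: "c \<in> W" "icomp E W y = icomp E W c" "card (icomp E W c) = g+1"
        proof (cases "icomp E W y = C1")
          case True then show ?thesis using that[of c1] v e1 by (simp add: C1_def W_def)
        next
          case False then have "icomp E W y = C2" using DC by blast
          then show ?thesis using that[of c2] v e2 by (simp add: C2_def W_def)
        qed
        have sub: "icomp E ?X y \<subseteq> icomp E W c" using DC c by simp
        have "g+1 \<le> card (icomp E ?X y)" using cX y by blast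
        then have Deq: "icomp E ?X y = icomp E W c"
          using card_subset_eq[OF cardcomp[OF WV] sub] c(3) card_mono[OF cardcomp[OF WV] sub] by linarith
        obtain z where z: "z \<in> icomp E W c" "{v,z} \<in> E" using adjv[OF c(1)] by blast
        have zc: "z \<in> icomp E ?X y" using z Deq by simp
        have zv: "{z,v} \<in> E" using z by (simp add: insert_commute)
        have "v \<in> icomp E ?X y" by (rule comp_closed_in[OF zc vX zv])
        then show False using vD by blast
      qed
      have XC: "?X \<subseteq> C1 \<union> C2"
      proof
        fix y assume y: "y \<in> ?X"
        have "v \<notin> icomp E ?X y" using vX comp_sub[of E ?X y] by blast
        then have "icomp E W y \<in> {C1, C2}" using Dcl[OF y] by blast
        moreover have "y \<in> W" using y vX unfolding W_def by blast
        then have "y \<in> icomp E W y" by (rule comp_self)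
        ultimately show "y \<in> C1 \<union> C2" by blast
      qed
      have "card ?X \<le> 2*g+2" using card_mono[OF _ XC] fin1 cU by simp
      moreover have "card ?X = n - card S \<and> card S \<le> n" using card_diff_n[OF SV finV assms(2)] .
      ultimately show ?thesis by linarith
    qed
    have "extra_connectivity g V E = n - 2*g - 2"
      unfolding extra_connectivity_def
    proof (rule Min_eqI[OF finK])
      show "n - 2*g - 2 \<in> {card S | S. Rg_cutset g V E S}" using Rg0 card0 by force
    next
      fix k assume "k \<in> {card S | S. Rg_cutset g V E S}"
      then obtain S where "k = card S" "Rg_cutset g V E S" by blast
      then show "n - 2*g - 2 \<le> k" using lower by simp
    qed
    then show "(\<exists>S. Rg_cutset g V E S) \<and> extra_connectivity g V E = n - 2 * g - 2"
      using Rg0 by blast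
  qed
qed

end
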